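(* (Symmetry extension lemma.) Let $H$ and $L$ be linear subspaces of $\mathbb{R}^n$ such that $H\cap L^\perp=\{o\}$ and $\dim H<\dim L$. If $E\subset S^{n-1}$ is nonempty, closed, invariant under $R_H$, and invariant under every element of $O(n)_{L^\perp}$, then $E$ is invariant under every element of $O(n)_{(H+L)^\perp}$. The same conclusion holds if invariance under $R_H$ is replaced by invariance under $R_{H^\perp}$.
   Context: For a linear subspace $S$ of $\mathbb{R}^n$, $O(n)_S$ is the pointwise stabilizer of $S$ in $O(n)$ (isometries in $O(n)$ acting as the identity on $S$), $S^\perp$ is its orthogonal complement, and $R_S$ is the reflection $x\mapsto 2(x|S)-x$ with $x|S$ the orthogonal projection onto $S$. A set $E$ is invariant under $\phi$ if $\phi E=E$. $o$ is the origin, $S^{n-1}$ the unit sphere, $H+L$ the vector sum. *)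

theory Defs
  imports "HOL-Analysis.Analysis"
begin

definition orth_proj :: "'a::euclidean_space set \<Rightarrow> 'a \<Rightarrow> 'a" where
  "orth_proj S x = (THE y. y \<in> S \<and> x - y \<in> orthogonal_comp S)"

definition refl_sub :: "'a::euclidean_space set \<Rightarrow> 'a \<Rightarrow> 'a" where
  "refl_sub S x = 2 *\<^sub>R orth_proj S x - x"

definition stab :: "'a::euclidean_space set \<Rightarrow> ('a \<Rightarrow> 'a) set" where
  "stab S = {f. orthogonal_transformation f \<and> (\<forall>x\<in>S. f x = x)}"

definition vsum_set :: "'a::euclidean_space set \<Rightarrow> 'a set \<Rightarrow> 'a set" where
  "vsum_set H L = {h + l | h l. h \<in> H \<and> l \<in> L}"

end

theory Submission
  imports Defs
begin


lemma oc_iff: "v \<in> orthogonal_comp S \<longleftrightarrow> (\<forall>y\<in>S. y \<bullet> v = 0)"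
  by (simp add: orthogonal_comp_def orthogonal_def)

lemma proj_exists:
  fixes S :: "'a::euclidean_space set"
  assumes "subspace S"
  shows "\<exists>y. y \<in> S \<and> x - y \<in> orthogonal_comp S"
proof -
  obtain y z where "y \<in> span S" "\<And>w. w \<in> span S \<Longrightarrow> orthogonal z w" "x = y + z"
    by (rule orthogonal_subspace_decomp_exists[of S x]) blast
  moreover have "span S = S" using assms by (simp add: span_eq_iff)
  ultimately show ?thesis
    by (auto simp: oc_iff orthogonal_def inner_commute intro!: exI[of _ y])
qed

lemma proj_unique:
  assumes "subspace S" "y1 \<in> S" "x - y1 \<in> orthogonal_comp S" "y2 \<in> S" "x - y2 \<in> orthogonal_comp S"
  shows "y1 = y2"
proof -
  have "y1 - y2 \<in> S" using assms by (simp add: subspace_diff)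
  moreover have "y1 - y2 \<in> orthogonal_comp S"
    using subspace_diff[OF subspace_orthogonal_comp assms(5) assms(3)] by simp
  ultimately have "(y1 - y2) \<bullet> (y1 - y2) = 0" by (simp add: oc_iff)
  then show ?thesis by simp
qed

lemma proj_in: "subspace S \<Longrightarrow> orth_proj S x \<in> S"
  and proj_perp: "subspace S \<Longrightarrow> x - orth_proj S x \<in> orthogonal_comp S"
proof -
  assume S: "subspace S"
  have "\<exists>!y. y \<in> S \<and> x - y \<in> orthogonal_comp S"
    using proj_exists[OF S] proj_unique[OF S] by blast
  then have "orth_proj S x \<in> S \<and> x - orth_proj S x \<in> orthogonal_comp S"
    unfolding orth_proj_def by (rule theI')
  then show "orth_proj S x \<in> S" "x - orth_proj S x \<in> orthogonal_comp S" by auto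
qed

lemma proj_eq: "subspace S \<Longrightarrow> y \<in> S \<Longrightarrow> x - y \<in> orthogonal_comp S \<Longrightarrow> orth_proj S x = y"
  using proj_unique proj_in proj_perp by blast

lemma proj_linear: assumes "subspace S" shows "linear (orth_proj S)"
proof (rule linearI)
  fix x y
  show "orth_proj S (x + y) = orth_proj S x + orth_proj S y"
    apply (rule proj_eq[OF assms])
    using proj_in[OF assms] proj_perp[OF assms] subspace_add[OF assms] 
      subspace_add[OF subspace_orthogonal_comp, of "x - orth_proj S x" S "y - orth_proj S y"]
    by (auto simp: algebra_simps)
next
  fix c x
  show "orth_proj S (c *\<^sub>R x) = c *\<^sub>R orth_proj S x"
    apply (rule proj_eq[OF assms])
    using proj_in[OF assms] proj_perp[OF assms] subspace_scale[OF assms]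
      subspace_scale[OF subspace_orthogonal_comp, of "x - orth_proj S x" S c]
    by (auto simp: algebra_simps)
qed

lemma proj_add_in: "subspace S \<Longrightarrow> w \<in> S \<Longrightarrow> orth_proj S (x + w) = orth_proj S x + w"
  apply (rule proj_eq)
    apply assumption
  using proj_in proj_perp subspace_add apply (metis add.commute)
  using proj_perp by (simp add: algebra_simps)

lemma perp_inner: "subspace S \<Longrightarrow> y \<in> S \<Longrightarrow> (x - orth_proj S x) \<bullet> y = 0"
  using proj_perp[of S x] by (simp add: oc_iff inner_commute)

lemma proj_sym: "subspace S \<Longrightarrow> orth_proj S x \<bullet> y = x \<bullet> orth_proj S y"
proof -
  assume S: "subspace S"
  have "orth_proj S x \<bullet> y = orth_proj S x \<bullet> orth_proj S y + orth_proj S x \<bullet> (y - orth_proj S y)"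
    by (simp add: inner_diff_right)
  also have "orth_proj S x \<bullet> (y - orth_proj S y) = 0" using perp_inner[OF S proj_in[OF S]]
    by (simp add: inner_commute)
  also have "orth_proj S x \<bullet> orth_proj S y = x \<bullet> orth_proj S y"
    using perp_inner[OF S proj_in[OF S], of x y] by (simp add: inner_diff_left)
  finally show ?thesis by simp
qed

lemma pyth: "subspace S \<Longrightarrow> (norm x)^2 = (norm (orth_proj S x))^2 + (norm (x - orth_proj S x))^2"
proof -
  assume S: "subspace S"
  have "orthogonal (orth_proj S x) (x - orth_proj S x)"
    using perp_inner[OF S proj_in[OF S], of x x] by (simp add: orthogonal_def inner_commute)
  from norm_add_Pythagorean[OF this] show ?thesis by simp
qed

lemma proj_norm_le: "subspace S \<Longrightarrow> norm (x - orth_proj S x) \<le> norm x"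
proof -
  assume S: "subspace S"
  have "(norm (x - orth_proj S x))^2 \<le> (norm x)^2" using pyth[OF S, of x] by simp
  then show ?thesis using power2_le_imp_le norm_ge_zero by blast
qed


lemma proj_idem: "subspace S \<Longrightarrow> orth_proj S (orth_proj S x) = orth_proj S x"
  by (rule proj_eq) (auto simp: proj_in subspace_0 subspace_orthogonal_comp)

lemma refl_linear: "subspace S \<Longrightarrow> linear (refl_sub S)"
proof -
  assume S: "subspace S"
  show ?thesis
    by (rule linearI) (simp_all add: refl_sub_def linear_add[OF proj_linear[OF S]]
        linear_scale[OF proj_linear[OF S]] algebra_simps)
qed

lemma refl_invol: "subspace S \<Longrightarrow> refl_sub S (refl_sub S x) = x"
proof -
  assume S: "subspace S"
  have "orth_proj S (2 *\<^sub>R orth_proj S x - x) = orth_proj S x"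
    using linear_diff[OF proj_linear[OF S]] linear_scale[OF proj_linear[OF S]] proj_idem[OF S]
      linear_add[OF proj_linear[OF S]]
    by (simp add: scaleR_2)
  then show ?thesis by (simp add: refl_sub_def scaleR_2)
qed

lemma refl_inner: "subspace S \<Longrightarrow> refl_sub S x \<bullet> refl_sub S y = x \<bullet> y"
proof -
  assume S: "subspace S"
  have a: "orth_proj S x \<bullet> y = x \<bullet> orth_proj S y" by (rule proj_sym[OF S])
  have b: "orth_proj S x \<bullet> orth_proj S y = x \<bullet> orth_proj S y"
    using perp_inner[OF S proj_in[OF S], of x y] by (simp add: inner_diff_left)
  show ?thesis unfolding refl_sub_def
    by (simp add: inner_diff_left inner_diff_right a b inner_commute[of y x])
qed

lemma refl_orth: "subspace S \<Longrightarrow> orthogonal_transformation (refl_sub S)"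
  by (simp add: orthogonal_transformation_def refl_linear refl_inner)

lemma move:
  fixes L :: "'a::euclidean_space set"
  assumes L: "subspace L" and q: "q \<in> orthogonal_comp L" and a: "a \<in> L" and b: "b \<in> L"
    and n: "norm a = norm b"
  shows "\<exists>g\<in>stab (orthogonal_comp L). g (q + a) = q + b"
proof (cases "a = b")
  case True
  then show ?thesis by (intro bexI[of _ "\<lambda>x. x"]) (auto simp: stab_def)
next
  case False
  define c where "c = a - b"
  have cL: "c \<in> L" using L a b by (simp add: c_def subspace_diff)
  have cc: "c \<bullet> c \<noteq> 0" using False by (simp add: c_def)
  define g where "g v = v - (2 * (v \<bullet> c) / (c \<bullet> c)) *\<^sub>R c" for v
  have lin: "linear g"
    by (rule linearI) (auto simp: g_def inner_add_left algebra_simps add_divide_distrib)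
  have inn: "g v \<bullet> g u = v \<bullet> u" for v u
  proof -
    define k where "k = c \<bullet> c"
    define x where "x = v \<bullet> c"
    define y where "y = u \<bullet> c"
    have "g v \<bullet> g u = v \<bullet> u - (2 * y / k) * x - (2 * x / k) * y + (2 * x / k) * (2 * y / k) * k"
    proof -
      have cu: "c \<bullet> u = y" "c \<bullet> v = x" by (simp_all add: x_def y_def inner_commute)
      show ?thesis
        unfolding g_def inner_diff_left inner_diff_right inner_scaleR_left inner_scaleR_right
        unfolding cu k_def[symmetric] x_def[symmetric] y_def[symmetric]
        by (simp add: algebra_simps)
    qed
    also have "\<dots> = v \<bullet> u" using cc by (simp add: k_def[symmetric] field_simps)
    finally show ?thesis .
  qed
  have gfix: "g x = x" if "x \<in> orthogonal_comp L" for x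
  proof -
    have "c \<bullet> x = 0" using that cL by (simp add: oc_iff)
    then show ?thesis by (simp add: g_def inner_commute)
  qed
  have qc: "q \<bullet> c = 0" using q cL by (simp add: oc_iff inner_commute)
  have aa: "a \<bullet> a = b \<bullet> b" using n by (simp add: norm_eq_sqrt_inner)
  have "g (q + a) = q + a - (2 * (a \<bullet> c) / (c \<bullet> c)) *\<^sub>R c"
    by (simp add: g_def inner_add_left qc)
  also have "2 * (a \<bullet> c) / (c \<bullet> c) = 1"
  proof -
    have "c \<bullet> c = 2 * (a \<bullet> c)" using aa
      by (simp add: c_def inner_diff_left inner_diff_right inner_commute[of b a])
    then show ?thesis using cc by simp
  qed
  finally have "g (q + a) = q + b" by (simp add: c_def)
  moreover have "g \<in> stab (orthogonal_comp L)"
    using lin inn gfix by (auto simp: stab_def orthogonal_transformation_def)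
  ultimately show ?thesis by blast
qed

lemma infdist_inv:
  assumes "orthogonal_transformation f" "f ` E = E"
  shows "infdist (f z) E = infdist z E"
proof -
  have d: "dist (f z) (f a) = dist z a" for a
    using assms(1) by (simp add: dist_norm orthogonal_transformation linear_diff[symmetric])
  have "infdist (f z) E = infdist (f z) (f ` E)" using assms(2) by simp
  also have "\<dots> = infdist z E"
    unfolding infdist_def by (simp add: image_image d)
  finally show ?thesis .
qed

lemma stab_diff:
  fixes S :: "'a::euclidean_space set"
  assumes S: "subspace S" and f: "f \<in> stab (orthogonal_comp S)"
  shows "f z - z \<in> S"
proof -
  have ot: "orthogonal_transformation f" and fx: "\<And>x. x \<in> orthogonal_comp S \<Longrightarrow> f x = x"
    using f by (auto simp: stab_def)
  have "f z - z \<in> orthogonal_comp (orthogonal_comp S)"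
    unfolding oc_iff
  proof
    fix v assume v: "v \<in> orthogonal_comp S"
    have "v \<bullet> f z = f v \<bullet> f z" using fx[OF v] by simp
    also have "\<dots> = v \<bullet> z" using ot by (simp add: orthogonal_transformation_def)
    finally show "v \<bullet> (f z - z) = 0" by (simp add: inner_diff_right)
  qed
  then show ?thesis using orthogonal_comp_self[OF S] by simp
qed



lemma key:
  fixes L L2 M Z :: "'a::euclidean_space set"
  assumes L: "subspace L" and L2: "subspace L2" and wL: "w \<in> L" and wL2: "w \<in> L2" and nw: "norm w = 1"
    and perp: "\<And>q. q \<in> orthogonal_comp L \<Longrightarrow> q \<in> orthogonal_comp L2 \<Longrightarrow> q \<in> orthogonal_comp M"
    and Zc: "compact Z" and Zne: "Z \<noteq> {}"
    and inv: "\<And>f z. f \<in> stab (orthogonal_comp L) \<union> stab (orthogonal_comp L2) \<Longrightarrow> z \<in> Z \<Longrightarrow> f z \<in> Z"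
  shows "\<exists>z\<in>Z. \<exists>q l. z = q + l \<and> q \<in> orthogonal_comp M \<and> l \<in> L"
proof -
  define \<phi> where "\<phi> z = norm (z - orth_proj L z)" for z
  have "continuous_on Z \<phi>"
    unfolding \<phi>_def
    using proj_linear[OF L] by (intro continuous_intros linear_continuous_on) (simp add: linear_conv_bounded_linear)
  then obtain zs where zs: "zs \<in> Z" and mn: "\<And>z. z \<in> Z \<Longrightarrow> \<phi> zs \<le> \<phi> z"
    using continuous_attains_inf[OF Zc Zne] by blast
  define q where "q = zs - orth_proj L zs"
  define l where "l = orth_proj L zs"
  have qL: "q \<in> orthogonal_comp L" using proj_perp[OF L] by (simp add: q_def)
  have lL: "l \<in> L" using proj_in[OF L] by (simp add: l_def)
  have zsql: "zs = q + l" by (simp add: q_def l_def)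
  define c where "c = norm l"
  have cwL: "c *\<^sub>R w \<in> L" using wL L by (simp add: subspace_scale)
  have cwL2: "c *\<^sub>R w \<in> L2" using wL2 L2 by (simp add: subspace_scale)
  obtain g where g: "g \<in> stab (orthogonal_comp L)" "g (q + l) = q + c *\<^sub>R w"
    using move[OF L qL lL cwL] nw by (auto simp: c_def)
  define z1 where "z1 = q + c *\<^sub>R w"
  have z1Z: "z1 \<in> Z" using inv[of g zs] g zs zsql by (auto simp: z1_def)
  define b2 where "b2 = orth_proj L2 z1"
  have b2: "b2 = orth_proj L2 q + c *\<^sub>R w" unfolding b2_def z1_def by (rule proj_add_in[OF L2 cwL2])
  define a2 where "a2 = z1 - b2"
  have a2: "a2 = q - orth_proj L2 q" by (simp add: a2_def b2 z1_def)
  have a2L2: "a2 \<in> orthogonal_comp L2" using proj_perp[OF L2] by (simp add: a2)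
  have b2L2: "b2 \<in> L2" using proj_in[OF L2] by (simp add: b2_def)
  define d where "d = norm b2"
  have dwL: "d *\<^sub>R w \<in> L" using wL L by (simp add: subspace_scale)
  have dwL2: "d *\<^sub>R w \<in> L2" using wL2 L2 by (simp add: subspace_scale)
  obtain h where h: "h \<in> stab (orthogonal_comp L2)" "h (a2 + b2) = a2 + d *\<^sub>R w"
    using move[OF L2 a2L2 b2L2 dwL2] nw by (auto simp: d_def)
  have z2Z: "a2 + d *\<^sub>R w \<in> Z" using inv[of h z1] h z1Z by (auto simp: a2_def)
  have "\<phi> (a2 + d *\<^sub>R w) = norm (a2 - orth_proj L a2)"
    unfolding \<phi>_def proj_add_in[OF L dwL] by (simp add: algebra_simps)
  also have "\<dots> \<le> norm a2" by (rule proj_norm_le[OF L])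
  finally have le1: "\<phi> (a2 + d *\<^sub>R w) \<le> norm a2" .
  have "\<phi> zs = norm q" by (simp add: \<phi>_def q_def)
  with mn[OF z2Z] le1 have "norm q \<le> norm a2" by simp
  moreover have "(norm q)^2 = (norm (orth_proj L2 q))^2 + (norm a2)^2" using pyth[OF L2, of q] by (simp add: a2)
  ultimately have "(norm (orth_proj L2 q))^2 \<le> 0"
    by (smt (verit) norm_ge_zero power_mono)
  then have "orth_proj L2 q = 0" by simp
  then have "q \<in> orthogonal_comp L2" using a2L2 by (simp add: a2)
  then have "q \<in> orthogonal_comp M" using perp qL by blast
  then show ?thesis using zs zsql lL by blast
qed



lemma main:
  fixes H L E S :: "'a::euclidean_space set"
  assumes H: "subspace H" and L: "subspace L"
    and HL: "H \<inter> orthogonal_comp L = {0}"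
    and dHL: "dim H < dim L"
    and Esph: "E \<subseteq> sphere 0 1" and Ene: "E \<noteq> {}" and Ecl: "closed E"
    and EL: "\<forall>f\<in>stab (orthogonal_comp L). f ` E = E"
    and S: "S = H \<or> S = orthogonal_comp H"
    and RE: "refl_sub S ` E = E"
  shows "\<forall>f\<in>stab (orthogonal_comp (vsum_set H L)). f ` E = E"
proof -
  define M where "M = vsum_set H L"
  define R where "R = refl_sub S"
  define L2 where "L2 = R ` L"
  define p where "p = orth_proj H"
  have Ssub: "subspace S" using S H subspace_orthogonal_comp by blast
  have Rlin: "linear R" using refl_linear[OF Ssub] by (simp add: R_def)
  have Rinv: "R (R x) = x" for x using refl_invol[OF Ssub] by (simp add: R_def)
  have Rinn: "R x \<bullet> R y = x \<bullet> y" for x y using refl_inner[OF Ssub] by (simp add: R_def)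
  have Rot: "orthogonal_transformation R" using refl_orth[OF Ssub] by (simp add: R_def)
  have M: "subspace M" unfolding M_def vsum_set_def by (rule subspace_sums[OF H L])
  have LM: "L \<subseteq> M" unfolding M_def vsum_set_def using subspace_0[OF H] by force
  have HM: "H \<subseteq> M" unfolding M_def vsum_set_def using subspace_0[OF L] by force
  have L2: "subspace L2" unfolding L2_def by (rule linear_subspace_image[OF Rlin L])
  have Rform: "R l = 2 *\<^sub>R p l - l \<or> R l = l - 2 *\<^sub>R p l" for l
  proof (cases "S = H")
    case True then show ?thesis by (simp add: R_def refl_sub_def p_def)
  next
    case False
    then have SH: "S = orthogonal_comp H" using S by blast
    have "orth_proj S l = l - p l"
      apply (rule proj_eq[OF Ssub])
      using proj_perp[OF H, of l] orthogonal_comp_subset[of H] proj_in[OF H, of l]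
      by (auto simp: SH p_def)
    then show ?thesis by (simp add: R_def refl_sub_def algebra_simps scaleR_2)
  qed
  have pH: "p x \<in> H" for x using proj_in[OF H] by (simp add: p_def)
  have L2M: "L2 \<subseteq> M"
  proof
    fix y assume "y \<in> L2"
    then obtain l where l: "l \<in> L" "y = R l" by (auto simp: L2_def)
    have a: "2 *\<^sub>R p l \<in> H" "- 2 *\<^sub>R p l \<in> H" using pH H by (simp_all add: subspace_scale subspace_neg)
    have b: "- l \<in> L" using l L by (simp add: subspace_neg)
    have m: "2 *\<^sub>R p l + - l \<in> M" "- 2 *\<^sub>R p l + l \<in> M"
      unfolding M_def vsum_set_def using a b l by blast+
    have m1: "2 *\<^sub>R p l - l \<in> M" using m(1) by (simp only: diff_conv_add_uminus)
    have m2: "l - 2 *\<^sub>R p l \<in> M" using m(2) by (simp only: diff_conv_add_uminus add.commute scaleR_minus_left)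
    have "R l \<in> M" using Rform[of l] m1 m2 by (elim disjE) simp_all
    then show "y \<in> M" using l by simp
  qed
  have perp: "q \<in> orthogonal_comp M" if qL: "q \<in> orthogonal_comp L" and qL2: "q \<in> orthogonal_comp L2" for q
  proof -
    have qp: "p l \<bullet> q = 0" if l: "l \<in> L" for l
    proof -
      have "l \<bullet> q = 0" using qL l by (simp add: oc_iff)
      moreover have "R l \<bullet> q = 0" using qL2 l by (auto simp: oc_iff L2_def)
      ultimately show ?thesis using Rform[of l]
        by (auto simp: inner_diff_left)
    qed
    have "p q \<in> orthogonal_comp L"
      unfolding oc_iff
    proof
      fix l assume "l \<in> L"
      then show "l \<bullet> p q = 0" using qp proj_sym[OF H, of l q] proj_sym[OF H, of q l]
        by (simp add: p_def inner_commute)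
    qed
    then have "p q = 0" using HL pH by blast
    then have qH: "q \<in> orthogonal_comp H" using proj_perp[OF H, of q] by (simp add: p_def)
    show ?thesis unfolding oc_iff
    proof
      fix m assume "m \<in> M"
      then obtain h l where "h \<in> H" "l \<in> L" "m = h + l" by (auto simp: M_def vsum_set_def)
      then show "m \<bullet> q = 0" using qH qL by (simp add: oc_iff inner_add_left)
    qed
  qed
  have dL2: "dim L2 = dim L"
  proof -
    have "dim L2 \<le> dim L" unfolding L2_def by (rule dim_image_le[OF Rlin])
    moreover have "R ` L2 = L" unfolding L2_def by (force simp: image_image Rinv)
    then have "dim L \<le> dim L2" using dim_image_le[OF Rlin, of L2] by simp
    ultimately show ?thesis by simp
  qed
  have d1: "dim {x + y |x y. x \<in> L \<and> y \<in> L2} + dim (L \<inter> L2) = dim L + dim L2"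
    by (rule dim_sums_Int[OF L L2])
  have d2: "dim M + dim (H \<inter> L) = dim H + dim L"
    unfolding M_def vsum_set_def by (rule dim_sums_Int[OF H L])
  have "{x + y |x y. x \<in> L \<and> y \<in> L2} \<subseteq> M"
    using LM L2M M by (auto intro: subspace_add)
  then have "dim {x + y |x y. x \<in> L \<and> y \<in> L2} \<le> dim M" by (rule dim_subset)
  then have "dim (L \<inter> L2) > 0" using d1 d2 dL2 dHL by linarith
  then have "\<not> (L \<inter> L2 \<subseteq> {0})" using dim_eq_0[of "L \<inter> L2"] by linarith
  then obtain w0 where w0: "w0 \<in> L \<inter> L2" "w0 \<noteq> 0" by blast
  define w where "w = w0 /\<^sub>R norm w0"
  have wL: "w \<in> L" "w \<in> L2" "norm w = 1"
    using w0 L L2 by (auto simp: w_def subspace_scale)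
  have EL2: "f ` E = E" if f: "f \<in> stab (orthogonal_comp L2)" for f
  proof -
    have fo: "orthogonal_transformation f" and ff: "\<And>x. x \<in> orthogonal_comp L2 \<Longrightarrow> f x = x"
      using f by (auto simp: stab_def)
    have "R \<circ> f \<circ> R \<in> stab (orthogonal_comp L)"
      unfolding stab_def
    proof (intro CollectI conjI ballI)
      show "orthogonal_transformation (R \<circ> f \<circ> R)"
        by (intro orthogonal_transformation_compose Rot fo)
      fix y assume y: "y \<in> orthogonal_comp L"
      have "R y \<in> orthogonal_comp L2"
        unfolding oc_iff L2_def using y by (auto simp: Rinn oc_iff)
      then show "(R \<circ> f \<circ> R) y = y" using ff Rinv by simp
    qed
    then have "(R \<circ> f \<circ> R) ` E = E" using EL by blast
    moreover have REE: "R ` E = E" using RE by (simp add: R_def)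
    ultimately have "R ` (f ` E) = E"
    proof -
      assume a: "(R \<circ> f \<circ> R) ` E = E" and b: "R ` E = E"
      have "R ` (f ` E) = R ` (f ` (R ` E))" using b by simp
      also have "\<dots> = (R \<circ> f \<circ> R) ` E" by (simp only: image_comp o_assoc)
      finally show ?thesis using a by simp
    qed
    then have "R ` R ` (f ` E) = R ` E" by simp
    then show ?thesis using REE by (simp add: image_image Rinv)
  qed
  have Einv: "f ` E = E" if "f \<in> stab (orthogonal_comp L) \<union> stab (orthogonal_comp L2)" for f
    using that EL EL2 by blast
  have fdiff: "f z - z \<in> M" if "f \<in> stab (orthogonal_comp L) \<union> stab (orthogonal_comp L2)" for f z
    using that stab_diff[OF L] stab_diff[OF L2] LM L2M by blast
  have fot: "orthogonal_transformation f" if "f \<in> stab (orthogonal_comp L) \<union> stab (orthogonal_comp L2)" for f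
    using that by (auto simp: stab_def)
  have closedM: "closed {z. z - y \<in> M}" for y
  proof -
    have "{z. z - y \<in> M} = (\<lambda>m. y + m) ` M" by (force simp: algebra_simps)
    then show ?thesis using closed_subspace[OF M] closed_translation by metis
  qed
  have slice: "y \<in> E" if x: "x \<in> E" and y: "norm y = 1" and yx: "y - x \<in> M" for x y
  proof -
    define Z0 where "Z0 = E \<inter> {z. z - x \<in> M}"
    have "compact Z0" unfolding Z0_def compact_eq_bounded_closed
      using Ecl closedM Esph bounded_subset[OF bounded_sphere] by (intro conjI closed_Int) blast+
    moreover have "Z0 \<noteq> {}" using x subspace_0[OF M] by (auto simp: Z0_def)
    moreover have "f z \<in> Z0" if "f \<in> stab (orthogonal_comp L) \<union> stab (orthogonal_comp L2)" "z \<in> Z0" for f z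
    proof -
      have "f z \<in> E" using Einv[OF that(1)] that(2) by (auto simp: Z0_def)
      moreover have "(f z - z) + (z - x) \<in> M"
        using fdiff[OF that(1)] that(2) by (intro subspace_add[OF M]) (auto simp: Z0_def)
      then have "f z - x \<in> M" by simp
      ultimately show ?thesis by (simp add: Z0_def)
    qed
    ultimately obtain z0 q0 l0 where z0: "z0 \<in> Z0" "z0 = q0 + l0" "q0 \<in> orthogonal_comp M" "l0 \<in> L"
      using key[OF L L2 wL perp] by blast
    define dd where "dd = infdist y E"
    define Z where "Z = sphere 0 1 \<inter> {z. z - y \<in> M} \<inter> {z. infdist z E = dd}"
    have "closed {z. infdist z E = dd}"
      by (intro closed_Collect_eq continuous_intros continuous_on_id)
    then have "compact Z" unfolding Z_def compact_eq_bounded_closed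
      using closedM bounded_subset[OF bounded_sphere] by (intro conjI closed_Int closed_sphere) blast+
    moreover have "Z \<noteq> {}" using y subspace_0[OF M] by (auto simp: Z_def dd_def)
    moreover have "f z \<in> Z" if "f \<in> stab (orthogonal_comp L) \<union> stab (orthogonal_comp L2)" "z \<in> Z" for f z
    proof -
      have "norm (f z) = norm z" using fot[OF that(1)] by (simp add: orthogonal_transformation)
      moreover have "(f z - z) + (z - y) \<in> M"
        using fdiff[OF that(1)] that(2) by (intro subspace_add[OF M]) (auto simp: Z_def)
      then have "f z - y \<in> M" by simp
      moreover have "infdist (f z) E = infdist z E" by (rule infdist_inv[OF fot[OF that(1)] Einv[OF that(1)]])
      ultimately show ?thesis using that(2) by (simp add: Z_def)
    qed
    ultimately obtain z q l where z: "z \<in> Z" "z = q + l" "q \<in> orthogonal_comp M" "l \<in> L"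
      using key[OF L L2 wL perp] by blast
    have "x - z0 \<in> M" using z0 subspace_neg[OF M, of "z0 - x"] by (simp add: Z0_def)
    then have "(z - y) + (y - x) + (x - z0) \<in> M" using z yx by (intro subspace_add[OF M]) (auto simp: Z_def)
    then have zz0: "z - z0 \<in> M" by simp
    have "q - q0 = (z - z0) - (l - l0)" using z z0 by simp
    moreover have "l - l0 \<in> M" using z(4) z0(4) LM by (intro subspace_diff[OF M]) auto
    ultimately have "q - q0 \<in> M" using zz0 M by (simp add: subspace_diff)
    moreover have "q - q0 \<in> orthogonal_comp M" by (rule subspace_diff[OF subspace_orthogonal_comp z(3) z0(3)])
    ultimately have "q - q0 \<in> M \<inter> orthogonal_comp M" by blast
    then have "q - q0 = 0" unfolding orthogonal_Int_0[OF M] by blast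
    then have "q = q0" by simp
    have ql: "orthogonal q l" "orthogonal q0 l0"
    proof -
      have "l \<in> M" "l0 \<in> M" using z(4) z0(4) LM by auto
      then have "l \<bullet> q = 0" "l0 \<bullet> q0 = 0" using z(3) z0(3) by (auto simp: oc_iff)
      then show "orthogonal q l" "orthogonal q0 l0" by (simp_all add: orthogonal_def inner_commute)
    qed
    have n1: "norm z = 1" "norm z0 = 1" using z z0 Esph by (auto simp: Z_def Z0_def)
    have e1: "(norm q)^2 + (norm l)^2 = 1"
      using norm_add_Pythagorean[OF ql(1)] n1(1) z(2) by simp
    have e2: "(norm q0)^2 + (norm l0)^2 = 1"
      using norm_add_Pythagorean[OF ql(2)] n1(2) z0(2) by simp
    have "(norm l0)^2 = (norm l)^2" using e1 e2 unfolding \<open>q = q0\<close> by linarith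
    then have nl: "norm l0 = norm l" by (rule power_eq_imp_eq_base) auto
    have qLp: "q \<in> orthogonal_comp L" using z orthogonal_comp_anti_mono[OF LM] by blast
    obtain g where g: "g \<in> stab (orthogonal_comp L)" "g (q + l0) = q + l"
      using move[OF L qLp z0(4) z(4) nl] by blast
    have "z0 \<in> E" using z0 by (simp add: Z0_def)
    then have "g z0 \<in> g ` E" by blast
    then have "g z0 \<in> E" using g(1) EL by blast
    then have "z \<in> E" using g(2) z z0 \<open>q = q0\<close> by simp
    then have "infdist z E = 0" by (simp add: infdist_zero)
    then have "infdist y E = 0" using z by (simp add: Z_def dd_def)
    then show "y \<in> E" using in_closed_iff_infdist_zero[OF Ecl Ene] by simp
  qed
  show ?thesis unfolding M_def[symmetric]
  proof
    fix g assume g: "g \<in> stab (orthogonal_comp M)"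
    have go: "orthogonal_transformation g" using g by (simp add: stab_def)
    show "g ` E = E"
    proof
      show "g ` E \<subseteq> E"
      proof
        fix y assume "y \<in> g ` E"
        then obtain x where x: "x \<in> E" "y = g x" by blast
        have "norm y = 1" using x Esph go by (auto simp: orthogonal_transformation)
        moreover have "y - x \<in> M" using stab_diff[OF M g] x by simp
        ultimately show "y \<in> E" using slice x by blast
      qed
    next
      show "E \<subseteq> g ` E"
      proof
        fix x assume x: "x \<in> E"
        obtain y where y: "x = g y" using orthogonal_transformation_surj[OF go] by (metis surjD)
        have "norm y = 1" using x Esph go y by (auto simp: orthogonal_transformation)
        moreover have "y - x \<in> M"
        proof -
          have "x - y \<in> M" using stab_diff[OF M g, of y] y by simp
          then have "- (x - y) \<in> M" by (rule subspace_neg[OF M])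
          then show ?thesis by simp
        qed
        ultimately have "y \<in> E" using slice x by blast
        then show "x \<in> g ` E" using y by blast
      qed
    qed
  qed
qed

theorem lemma3p7:
  fixes H L E :: "'a::euclidean_space set"
  assumes "subspace H" and "subspace L"
    and "H \<inter> orthogonal_comp L = {0}"
    and "dim H < dim L"
    and "E \<subseteq> sphere 0 1" and "E \<noteq> {}" and "closed E"
    and "\<forall>f\<in>stab (orthogonal_comp L). f ` E = E"
  shows "(refl_sub H ` E = E \<longrightarrow> (\<forall>f\<in>stab (orthogonal_comp (vsum_set H L)). f ` E = E))
       \<and> (refl_sub (orthogonal_comp H) ` E = E \<longrightarrow> (\<forall>f\<in>stab (orthogonal_comp (vsum_set H L)). f ` E = E))"
  using main[OF assms, of H] main[OF assms, of "orthogonal_comp H"] by blast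

end
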